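(* Let $X_d=X^{\otimes d}$ and suppose $\sum_{k=1}^\infty\bar\lambda^X_k\mathbf 1(\bar\lambda^X_k<e^{-x})=\varphi(x)$, $x\ge0$, for some slowly varying function $\varphi$. Then $$\lim_{d\to\infty}d\,\varphi\bigl(\ln n^{X_d}(\varepsilon)\bigr)=-\ln(1-\varepsilon^2)\quad\text{for all }\varepsilon\in(0,1).$$
   Context: Let $X$ be a centered random element of a separable Hilbert space $H$ with $\mathbb E\|X\|^2<\infty$, covariance eigenvalues $\lambda^X_1\ge\lambda^X_2\ge\dots\ge0$ (with multiplicity, padded with zeros), $\lambda^X_1>0$, trace $\Lambda^X$, and $\bar\lambda^X_k=\lambda^X_k/\Lambda^X$. $X_d=X^{\otimes d}$ is the centered random element of $H^{\otimes d}$ with covariance operator $(K^X)^{\otimes d}$; its eigenvalues are $\prod_{j=1}^d\lambda^X_{k_j}$. With $\bar\lambda^{X_d}_k$ the normalized nonincreasing eigenvalues of $X_d$, $n^{X_d}(\varepsilon)=\min\{n\in\mathbb N:\sum_{k>n}\bar\lambda^{X_d}_k\le\varepsilon^2\}$. A slowly varying function is a positive measurable $\varphi$ on some $[T,\infty)$ with $\varphi(cx)/\varphi(x)\to1$ as $x\to\infty$ for every $c>0$. *)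

theory Defs
  imports "HOL-Analysis.Analysis" "HOL-Library.Equipollence"
begin

definition normalize_eigs :: "(nat \<Rightarrow> real) \<Rightarrow> nat \<Rightarrow> real" where
  "normalize_eigs lam k = lam k / (\<Sum>i. lam i)"

text \<open>Eigenvalues of the covariance of X^{tensor d}: indexed by multi-indices
  (lists of length d), the eigenvalue is the product of the factor eigenvalues.\<close>
definition tensor_eig :: "(nat \<Rightarrow> real) \<Rightarrow> nat list \<Rightarrow> real" where
  "tensor_eig lam ks = prod_list (map lam ks)"

definition multi_indices :: "nat \<Rightarrow> nat list set" where
  "multi_indices d = {ks. length ks = d}"

text \<open>mu is the nonincreasing arrangement (with multiplicity, padded by zeros)
  of the nonnegative family f on the index set A.\<close>
definition decr_arrangement :: "('a \<Rightarrow> real) \<Rightarrow> 'a set \<Rightarrow> (nat \<Rightarrow> real) \<Rightarrow> bool" where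
  "decr_arrangement f A mu \<longleftrightarrow> decseq mu \<and> (\<forall>k. 0 \<le> mu k) \<and>
     (\<forall>v>0. {k. mu k = v} \<approx> {a\<in>A. f a = v})"

text \<open>n(eps) = min { n : sum_{k>n} lambdabar_k <= eps^2 } (1-based indexing in the paper;
  here 0-based, so the tail after the first n terms is sum_k lambdabar (k+n)).\<close>
definition n_eps :: "(nat \<Rightarrow> real) \<Rightarrow> real \<Rightarrow> nat" where
  "n_eps lbar \<epsilon> = (LEAST n. (\<Sum>k. lbar (k + n)) \<le> \<epsilon>\<^sup>2)"

definition slowly_varying :: "(real \<Rightarrow> real) \<Rightarrow> bool" where
  "slowly_varying \<phi> \<longleftrightarrow> (\<exists>T. (\<forall>x\<ge>T. 0 < \<phi> x) \<and>
     \<phi> \<in> borel_measurable (restrict_space borel {T..}) \<and>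
     (\<forall>c>0. ((\<lambda>x. \<phi> (c * x) / \<phi> x) \<longlongrightarrow> 1) at_top))"

end

theory Submission
  imports Defs
begin


definition LB :: "nat set \<Rightarrow> nat \<Rightarrow> nat list set" where
  "LB B d = {xs. set xs \<subseteq> B \<and> length xs = d}"

lemma LB_Suc: "LB B (Suc d) = (\<lambda>(x,xs). x # xs) ` (B \<times> LB B d)"
  unfolding LB_def by (auto simp: length_Suc_conv image_iff)

lemma LB_inj: "inj_on (\<lambda>(x,xs). x # xs) (B \<times> LB B d)"
  by (auto simp: inj_on_def)

lemma LB_finite: "finite B \<Longrightarrow> finite (LB B d)"
  unfolding LB_def by (rule finite_lists_length_eq)

lemma sum_LB_prod:
  fixes p :: "nat \<Rightarrow> real"
  assumes "finite B"
  shows "(\<Sum>ks\<in>LB B d. tensor_eig p ks) = (\<Sum>k\<in>B. p k) ^ d"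
proof (induction d)
  case 0
  have "LB B 0 = {[]}" unfolding LB_def by auto
  then show ?case by (simp add: tensor_eig_def)
next
  case (Suc d)
  have "(\<Sum>ks\<in>LB B (Suc d). tensor_eig p ks) = (\<Sum>(x,xs)\<in>B \<times> LB B d. tensor_eig p (x#xs))"
    unfolding LB_Suc by (subst sum.reindex[OF LB_inj]) (simp add: case_prod_unfold)
  also have "\<dots> = (\<Sum>x\<in>B. \<Sum>xs\<in>LB B d. p x * tensor_eig p xs)"
    by (simp add: sum.cartesian_product tensor_eig_def)
  also have "\<dots> = (\<Sum>x\<in>B. p x) * (\<Sum>xs\<in>LB B d. tensor_eig p xs)"
    by (simp add: sum_product)
  finally show ?case using Suc by simp
qed

lemma sum_LB_prod_Y:
  fixes p Y :: "nat \<Rightarrow> real"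
  assumes "finite B"
  shows "(\<Sum>ks\<in>LB B d. tensor_eig p ks * sum_list (map Y ks)) =
     real d * (\<Sum>k\<in>B. p k) ^ (d - 1) * (\<Sum>k\<in>B. p k * Y k)"
proof (induction d)
  case 0
  have "LB B 0 = {[]}" unfolding LB_def by auto
  then show ?case by (simp add: tensor_eig_def)
next
  case (Suc d)
  let ?S = "(\<Sum>k\<in>B. p k)" and ?M = "(\<Sum>k\<in>B. p k * Y k)"
  have "(\<Sum>ks\<in>LB B (Suc d). tensor_eig p ks * sum_list (map Y ks))
      = (\<Sum>(x,xs)\<in>B \<times> LB B d. tensor_eig p (x#xs) * sum_list (map Y (x#xs)))"
    unfolding LB_Suc by (subst sum.reindex[OF LB_inj]) (simp add: case_prod_unfold)
  also have "\<dots> = (\<Sum>x\<in>B. \<Sum>xs\<in>LB B d. p x * Y x * tensor_eig p xs + p x * (tensor_eig p xs * sum_list (map Y xs)))"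
    by (simp add: sum.cartesian_product tensor_eig_def algebra_simps)
  also have "\<dots> = ?M * (\<Sum>xs\<in>LB B d. tensor_eig p xs) + ?S * (\<Sum>xs\<in>LB B d. tensor_eig p xs * sum_list (map Y xs))"
    by (simp add: sum.distrib sum_product)
  also have "\<dots> = ?M * ?S ^ d + ?S * (real d * ?S ^ (d - 1) * ?M)"
    using Suc sum_LB_prod[OF assms] by simp
  also have "\<dots> = real (Suc d) * ?S ^ (Suc d - 1) * ?M"
    by (cases d) (auto simp: algebra_simps)
  finally show ?case .
qed




lemma eqpoll_empty_transfer: "X \<approx> Y \<Longrightarrow> X = {} \<longleftrightarrow> Y = {}"
  by (metis eqpoll_empty_iff_empty eqpoll_sym eqpoll_trans)

lemma downclosed_eq_lessThan:
  fixes K :: "nat set"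
  assumes "finite K" "\<And>k j. k \<in> K \<Longrightarrow> j \<le> k \<Longrightarrow> j \<in> K"
  shows "K = {..<card K}"
proof (cases "K = {}")
  case True then show ?thesis by simp
next
  case False
  have "K = {..Max K}"
  proof
    show "K \<subseteq> {..Max K}" using assms(1) by (auto intro: Max_ge)
    show "{..Max K} \<subseteq> K" using assms(2) Max_in[OF assms(1) False] by (meson atMost_iff subsetI)
  qed
  then show ?thesis by (metis card_atMost lessThan_Suc_atMost)
qed

definition Aset :: "(nat \<Rightarrow> real) \<Rightarrow> nat \<Rightarrow> real \<Rightarrow> nat list set" where
  "Aset p d v = {a \<in> multi_indices d. v \<le> tensor_eig p a}"

locale probseq =
  fixes p :: "nat \<Rightarrow> real"
  assumes pos: "\<And>k. 0 < p k" and le1: "\<And>k. p k \<le> 1"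
    and summ: "summable p" and sum1: "suminf p = 1"
begin

lemma fin_ge: "0 < v \<Longrightarrow> finite {k. v \<le> p k}"
proof -
  assume v: "0 < v"
  have "p \<longlonglongrightarrow> 0" using summ summable_LIMSEQ_zero by blast
  then have "eventually (\<lambda>k. p k < v) sequentially"
    using v order_tendstoD(2) by blast
  then obtain K where "\<And>k. k \<ge> K \<Longrightarrow> p k < v" by (auto simp: eventually_sequentially)
  then have "{k. v \<le> p k} \<subseteq> {..<K}" by (force simp: not_le[symmetric])
  then show ?thesis using finite_subset by blast
qed

lemma tensor_nonneg: "0 \<le> tensor_eig p ks"
  unfolding tensor_eig_def by (induction ks) (auto intro!: mult_nonneg_nonneg less_imp_le[OF pos])

lemma tensor_le1: "tensor_eig p ks \<le> 1"
  unfolding tensor_eig_def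
proof (induction ks)
  case (Cons a ks)
  have "0 \<le> prod_list (map p ks)" using tensor_nonneg[of ks] by (simp add: tensor_eig_def)
  then show ?case
    using pos[of a] le1[of a] Cons by (simp add: mult_le_one less_imp_le)
qed simp

lemma tensor_pos: "0 < tensor_eig p ks"
  unfolding tensor_eig_def by (induction ks) (auto intro!: mult_pos_pos pos)

lemma tensor_le_factor: "k \<in> set ks \<Longrightarrow> tensor_eig p ks \<le> p k"
proof (induction ks)
  case (Cons a ks)
  show ?case
  proof (cases "k = a")
    case True then show ?thesis using tensor_le1[of ks] pos[of a]
      by (simp add: tensor_eig_def mult_left_le less_imp_le)
  next
    case False
    then have "tensor_eig p ks \<le> p k" using Cons by simp
    then show ?thesis using le1[of a] tensor_nonneg[of ks]
      by (simp add: tensor_eig_def) (meson mult_left_le_one_le order_trans pos less_imp_le)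
  qed
qed simp

lemma Aset_sub: "Aset p d v \<subseteq> LB {k. v \<le> p k} d"
  unfolding Aset_def LB_def multi_indices_def
  using tensor_le_factor order_trans by fastforce

lemma Aset_finite: "0 < v \<Longrightarrow> finite (Aset p d v)"
  using Aset_sub LB_finite fin_ge finite_subset by metis

lemma sum_fin_le1: "finite B \<Longrightarrow> (\<Sum>k\<in>B. p k) \<le> 1"
proof -
  assume B: "finite B"
  obtain K where "B \<subseteq> {..<K}"
    using B by (meson finite_nat_iff_bounded)
  then have "(\<Sum>k\<in>B. p k) \<le> (\<Sum>k<K. p k)"
    by (intro sum_mono2) (auto intro: less_imp_le pos)
  also have "\<dots> \<le> 1" using sum_le_suminf[OF summ, of "{..<K}"] sum1 pos
    by (simp add: less_imp_le)
  finally show ?thesis .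
qed

lemma sum_fin_nonneg: "0 \<le> (\<Sum>k\<in>B. p k)"
  by (simp add: sum_nonneg less_imp_le pos)

lemma sum_Aset_le1: "0 < v \<Longrightarrow> (\<Sum>a\<in>Aset p d v. tensor_eig p a) \<le> 1"
proof -
  assume v: "0 < v"
  have "(\<Sum>a\<in>Aset p d v. tensor_eig p a) \<le> (\<Sum>a\<in>LB {k. v \<le> p k} d. tensor_eig p a)"
    by (intro sum_mono2 Aset_sub) (auto intro: LB_finite fin_ge v tensor_nonneg)
  also have "\<dots> = (\<Sum>k\<in>{k. v \<le> p k}. p k) ^ d"
    by (rule sum_LB_prod[OF fin_ge[OF v]])
  also have "\<dots> \<le> 1"
    using sum_fin_le1[OF fin_ge[OF v]] sum_fin_nonneg by (simp add: power_le_one)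
  finally show ?thesis .
qed

lemma card_Aset_le: "0 < v \<Longrightarrow> v * card (Aset p d v) \<le> 1"
proof -
  assume v: "0 < v"
  have "v * card (Aset p d v) = (\<Sum>a\<in>Aset p d v. v)" by simp
  also have "\<dots> \<le> (\<Sum>a\<in>Aset p d v. tensor_eig p a)"
    by (intro sum_mono) (auto simp: Aset_def)
  also have "\<dots> \<le> 1" by (rule sum_Aset_le1[OF v])
  finally show ?thesis .
qed

end




context probseq begin

lemma arr_K:
  assumes arr: "decr_arrangement (tensor_eig p) (multi_indices d) q" and v: "0 < v"
  shows "{k. v \<le> q k} = {..<card (Aset p d v)}"
    and "(\<Sum>k<card (Aset p d v). q k) = (\<Sum>a\<in>Aset p d v. tensor_eig p a)"
proof -
  let ?P = "tensor_eig p" and ?M = "multi_indices d"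
  define A where "A = Aset p d v"
  define K where "K = {k. v \<le> q k}"
  have dec: "decseq q" and lev: "\<And>w. w > 0 \<Longrightarrow> {k. q k = w} \<approx> {a\<in>?M. ?P a = w}"
    using arr unfolding decr_arrangement_def by auto
  have Afin: "finite A" unfolding A_def using Aset_finite v by blast
  have levA: "{a\<in>?M. ?P a = w} = {a\<in>A. ?P a = w}" if "w \<ge> v" for w
    using that unfolding A_def Aset_def by auto
  have levK: "{k. q k = w} = {k\<in>K. q k = w}" if "w \<ge> v" for w
    using that unfolding K_def by auto
  have img: "q ` K = ?P ` A"
  proof
    show "q ` K \<subseteq> ?P ` A"
    proof
      fix w assume "w \<in> q ` K"
      then obtain k where k: "k \<in> K" "w = q k" by auto
      then have wv: "w \<ge> v" unfolding K_def by auto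
      have "{k. q k = w} \<noteq> {}" using k by auto
      then have "{a\<in>?M. ?P a = w} \<noteq> {}" using lev[of w] wv v eqpoll_empty_transfer by auto
      then show "w \<in> ?P ` A" using levA[OF wv] by auto
    qed
  next
    show "?P ` A \<subseteq> q ` K"
    proof
      fix w assume "w \<in> ?P ` A"
      then obtain a where a: "a \<in> A" "w = ?P a" by auto
      then have wv: "w \<ge> v" unfolding A_def Aset_def by auto
      have "{a\<in>?M. ?P a = w} \<noteq> {}" using a levA[OF wv] by auto
      moreover have "{k. q k = w} \<approx> {a\<in>?M. ?P a = w}" using lev[of w] wv v by auto
      ultimately have "{k. q k = w} \<noteq> {}" using eqpoll_empty_transfer by blast
      then obtain k where "q k = w" by auto
      then show "w \<in> q ` K" using wv unfolding K_def by auto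
    qed
  qed
  have Wv: "w \<ge> v" if "w \<in> ?P ` A" for w using that unfolding A_def Aset_def by auto
  have levfin: "finite {k\<in>K. q k = w} \<and> card {k\<in>K. q k = w} = card {a\<in>A. ?P a = w}"
    if "w \<in> ?P ` A" for w
  proof -
    have wv: "w \<ge> v" using Wv that .
    have e: "{k\<in>K. q k = w} \<approx> {a\<in>A. ?P a = w}"
      using lev[of w] wv v levA[OF wv] levK[OF wv] by auto
    have f: "finite {a\<in>A. ?P a = w}" using Afin by auto
    then have "finite {k\<in>K. q k = w}" using eqpoll_finite_iff[OF e] by simp
    then show ?thesis using f e eqpoll_iff_card by blast
  qed
  have KU: "K = (\<Union>w\<in>?P ` A. {k\<in>K. q k = w})" using img by auto
  have Kfin: "finite K" using KU levfin Afin by (metis (no_types, lifting) finite_UN_I finite_imageI)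
  have "card K = (\<Sum>k\<in>K. 1)" by simp
  also have "\<dots> = (\<Sum>w\<in>q ` K. \<Sum>k\<in>{k\<in>K. q k = w}. 1)"
    by (rule sum.image_gen[OF Kfin])
  also have "\<dots> = (\<Sum>w\<in>?P ` A. \<Sum>a\<in>{a\<in>A. ?P a = w}. 1)"
    unfolding img using levfin by (intro sum.cong) auto
  also have "\<dots> = (\<Sum>a\<in>A. 1)" by (rule sum.image_gen[OF Afin, symmetric])
  finally have cardK: "card K = card A" by simp
  have "(\<Sum>k\<in>K. q k) = (\<Sum>w\<in>q ` K. \<Sum>k\<in>{k\<in>K. q k = w}. q k)"
    by (rule sum.image_gen[OF Kfin])
  also have "\<dots> = (\<Sum>w\<in>?P ` A. \<Sum>k\<in>{k\<in>K. q k = w}. w)"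
    unfolding img by (intro sum.cong) auto
  also have "\<dots> = (\<Sum>w\<in>?P ` A. \<Sum>a\<in>{a\<in>A. ?P a = w}. w)"
    using levfin by (intro sum.cong) auto
  also have "\<dots> = (\<Sum>w\<in>?P ` A. \<Sum>a\<in>{a\<in>A. ?P a = w}. ?P a)"
    by (intro sum.cong) auto
  also have "\<dots> = (\<Sum>a\<in>A. ?P a)" by (rule sum.image_gen[OF Afin, symmetric])
  finally have sumK: "(\<Sum>k\<in>K. q k) = (\<Sum>a\<in>A. ?P a)" .
  have Kdown: "K = {..<card K}"
    by (rule downclosed_eq_lessThan[OF Kfin]) (use dec in \<open>auto simp: K_def decseq_def intro: order_trans\<close>)
  show "{k. v \<le> q k} = {..<card (Aset p d v)}"
    using Kdown cardK unfolding K_def A_def by simp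
  show "(\<Sum>k<card (Aset p d v). q k) = (\<Sum>a\<in>Aset p d v. tensor_eig p a)"
    using Kdown cardK sumK unfolding K_def A_def by metis
qed

end



context probseq begin

lemma arr_nonneg: "decr_arrangement (tensor_eig p) (multi_indices d) q \<Longrightarrow> 0 \<le> q k"
  unfolding decr_arrangement_def by auto

lemma arr_partial_le1:
  assumes arr: "decr_arrangement (tensor_eig p) (multi_indices d) q"
  shows "(\<Sum>k<n. q k) \<le> 1"
proof -
  have dec: "decseq q" and nn: "\<And>k. 0 \<le> q k" using arr unfolding decr_arrangement_def by auto
  have pos_case: "(\<Sum>k<m. q k) \<le> 1" if "\<forall>k<m. 0 < q k" for m
  proof (cases m)
    case 0 then show ?thesis by simp
  next
    case (Suc j)
    define v where "v = q j"
    have v: "0 < v" using that Suc v_def by auto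
    have "{..<m} \<subseteq> {k. v \<le> q k}" using dec unfolding v_def Suc decseq_def by auto
    then have sub: "{..<m} \<subseteq> {..<card (Aset p d v)}" using arr_K(1)[OF arr v] by simp
    have "(\<Sum>k<m. q k) \<le> (\<Sum>k<card (Aset p d v). q k)"
      by (rule sum_mono2) (use sub nn in auto)
    also have "\<dots> \<le> 1" using arr_K(2)[OF arr v] sum_Aset_le1[OF v] by simp
    finally show ?thesis .
  qed
  define S where "S = {k. k < n \<and> 0 < q k}"
  have Sfin: "finite S" unfolding S_def by auto
  have S: "S = {..<card S}"
    by (rule downclosed_eq_lessThan[OF Sfin])
       (auto simp: S_def dest: decseqD[OF dec] intro: order_less_le_trans)
  have "(\<Sum>k<n. q k) = (\<Sum>k\<in>S. q k)"
    by (rule sum.mono_neutral_right) (use nn in \<open>auto simp: S_def le_less\<close>)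
  also have "\<dots> \<le> 1" using pos_case[of "card S"] S unfolding S_def
    by (metis (mono_tags, lifting) lessThan_iff mem_Collect_eq)
  finally show ?thesis .
qed

lemma arr_summable:
  assumes arr: "decr_arrangement (tensor_eig p) (multi_indices d) q"
  shows "summable q"
  by (rule summableI_nonneg_bounded[where x=1]) (use arr_nonneg[OF arr] arr_partial_le1[OF arr] in auto)

lemma arr_suminf:
  assumes arr: "decr_arrangement (tensor_eig p) (multi_indices d) q"
  shows "suminf q = 1"
proof (rule antisym)
  show "suminf q \<le> 1" by (rule suminf_le_const[OF arr_summable[OF arr] arr_partial_le1[OF arr]])
  have low: "(\<Sum>k<K. p k) ^ d \<le> suminf q" for K
  proof -
    let ?L = "LB {..<K} d"
    have Lfin: "finite ?L" by (rule LB_finite) simp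
    show ?thesis
    proof (cases "?L = {}")
      case True
      have "K = 0"
      proof (rule ccontr)
        assume "K \<noteq> 0"
        then have "replicate d 0 \<in> ?L" unfolding LB_def by auto
        then show False using True by simp
      qed
      moreover have "d \<noteq> 0"
      proof
        assume "d = 0"
        then have "[] \<in> ?L" unfolding LB_def by auto
        then show False using True by simp
      qed
      ultimately have "K = 0 \<and> d > 0" by simp
      then show ?thesis using suminf_nonneg[OF arr_summable[OF arr] arr_nonneg[OF arr]] by (simp add: power_0_left)
    next
      case False
      define v where "v = Min (tensor_eig p ` ?L)"
      have v: "0 < v" unfolding v_def using Lfin False tensor_pos by simp
      have sub: "?L \<subseteq> Aset p d v"
        unfolding LB_def Aset_def multi_indices_def v_def using Lfin
        by (auto intro!: Min_le simp: LB_def)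
      have "(\<Sum>k<K. p k) ^ d = (\<Sum>a\<in>?L. tensor_eig p a)" by (simp add: sum_LB_prod)
      also have "\<dots> \<le> (\<Sum>a\<in>Aset p d v. tensor_eig p a)"
        by (rule sum_mono2[OF Aset_finite[OF v] sub]) (simp add: tensor_nonneg)
      also have "\<dots> = (\<Sum>k<card (Aset p d v). q k)" using arr_K(2)[OF arr v] by simp
      also have "\<dots> \<le> suminf q" by (rule sum_le_suminf[OF arr_summable[OF arr]]) (auto simp: arr_nonneg[OF arr])
      finally show ?thesis .
    qed
  qed
  have "(\<lambda>K. (\<Sum>k<K. p k) ^ d) \<longlonglongrightarrow> 1 ^ d"
    using summable_LIMSEQ[OF summ] sum1 by (intro tendsto_power) simp
  then show "1 \<le> suminf q" using low by (intro LIMSEQ_le_const2[where a="suminf q"]) auto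
qed

lemma neps_facts:
  assumes arr: "decr_arrangement (tensor_eig p) (multi_indices d) q"
    and e: "0 < \<epsilon>" "\<epsilon> < 1"
  shows "1 - \<epsilon>\<^sup>2 \<le> (\<Sum>k<n_eps q \<epsilon>. q k)"
    and "\<And>m. 1 - \<epsilon>\<^sup>2 \<le> (\<Sum>k<m. q k) \<Longrightarrow> n_eps q \<epsilon> \<le> m"
proof -
  have tail: "(\<Sum>k. q (k + n)) = 1 - (\<Sum>k<n. q k)" for n
    using suminf_split_initial_segment[OF arr_summable[OF arr], of n] arr_suminf[OF arr] by simp
  have iff: "(\<Sum>k. q (k + n)) \<le> \<epsilon>\<^sup>2 \<longleftrightarrow> 1 - \<epsilon>\<^sup>2 \<le> (\<Sum>k<n. q k)" for n
    using tail[of n] by linarith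
  have "(\<lambda>n. \<Sum>k<n. q k) \<longlonglongrightarrow> 1"
    using summable_LIMSEQ[OF arr_summable[OF arr]] arr_suminf[OF arr] by simp
  moreover have "1 - \<epsilon>\<^sup>2 < 1" using e by simp
  ultimately have "eventually (\<lambda>n. 1 - \<epsilon>\<^sup>2 < (\<Sum>k<n. q k)) sequentially"
    by (rule order_tendstoD)
  then obtain n0 where "1 - \<epsilon>\<^sup>2 \<le> (\<Sum>k<n0. q k)"
    by (metis eventually_sequentially order.refl less_imp_le)
  then have ex: "(\<Sum>k. q (k + n0)) \<le> \<epsilon>\<^sup>2" using iff by simp
  show "1 - \<epsilon>\<^sup>2 \<le> (\<Sum>k<n_eps q \<epsilon>. q k)"
    unfolding n_eps_def using LeastI[of "\<lambda>n. (\<Sum>k. q (k + n)) \<le> \<epsilon>\<^sup>2", OF ex] iff by blast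
  show "n_eps q \<epsilon> \<le> m" if "1 - \<epsilon>\<^sup>2 \<le> (\<Sum>k<m. q k)" for m
    unfolding n_eps_def using that iff by (intro Least_le) blast
qed

lemma E1:
  assumes arr: "decr_arrangement (tensor_eig p) (multi_indices d) q"
    and e: "0 < \<epsilon>" "\<epsilon> < 1"
    and h: "1 - \<epsilon>\<^sup>2 \<le> (\<Sum>a\<in>Aset p d (exp (-t)). tensor_eig p a)"
  shows "real (n_eps q \<epsilon>) \<le> exp t"
proof -
  have v: "0 < exp (-t)" by simp
  have "n_eps q \<epsilon> \<le> card (Aset p d (exp (-t)))"
    using neps_facts(2)[OF arr e] h arr_K(2)[OF arr v] by simp
  moreover have "exp (-t) * card (Aset p d (exp (-t))) \<le> 1" by (rule card_Aset_le[OF v])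
  then have "card (Aset p d (exp (-t))) \<le> exp t"
    by (simp add: exp_minus field_simps)
  ultimately show ?thesis by linarith
qed

lemma E3:
  assumes arr: "decr_arrangement (tensor_eig p) (multi_indices d) q"
    and e: "0 < \<epsilon>" "\<epsilon> < 1" and v: "0 < v"
  shows "1 - \<epsilon>\<^sup>2 \<le> real (n_eps q \<epsilon>) * v + (\<Sum>a\<in>Aset p d v. tensor_eig p a)"
proof -
  let ?n = "n_eps q \<epsilon>"
  have nn: "\<And>k. 0 \<le> q k" using arr_nonneg[OF arr] .
  have "(\<Sum>k<?n. q k) = (\<Sum>k<?n. if v \<le> q k then q k else 0) + (\<Sum>k<?n. if v \<le> q k then 0 else q k)"
    by (simp add: sum.distrib[symmetric]) (intro sum.cong, auto)
  also have "(\<Sum>k<?n. if v \<le> q k then q k else 0) \<le> (\<Sum>k\<in>{k. v \<le> q k}. q k)"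
  proof -
    have "(\<Sum>k<?n. if v \<le> q k then q k else 0) = (\<Sum>k\<in>{..<?n} \<inter> {k. v \<le> q k}. q k)"
      by (simp add: sum.inter_restrict)
    also have "\<dots> \<le> (\<Sum>k\<in>{k. v \<le> q k}. q k)"
      by (rule sum_mono2) (use arr_K(1)[OF arr v] nn in auto)
    finally show ?thesis .
  qed
  also have "(\<Sum>k\<in>{k. v \<le> q k}. q k) = (\<Sum>a\<in>Aset p d v. tensor_eig p a)"
    using arr_K[OF arr v] by simp
  also have "(\<Sum>k<?n. if v \<le> q k then 0 else q k) \<le> (\<Sum>k<?n. v)"
    by (rule sum_mono) (use v in auto)
  finally have "(\<Sum>k<?n. q k) \<le> (\<Sum>a\<in>Aset p d v. tensor_eig p a) + real ?n * v" by simp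
  then show ?thesis using neps_facts(1)[OF arr e] by linarith
qed

end



context probseq begin

definition Bs :: "real \<Rightarrow> nat set" where "Bs s = {k. exp (-s) \<le> p k}"
definition psi :: "real \<Rightarrow> real" where "psi s = (\<Sum>k\<in>Bs s. p k)"
definition mY :: "real \<Rightarrow> real" where "mY s = (\<Sum>k\<in>Bs s. p k * (- ln (p k)))"

lemma Bs_finite: "finite (Bs s)" unfolding Bs_def by (rule fin_ge) simp

lemma psi_nonneg: "0 \<le> psi s" unfolding psi_def by (rule sum_fin_nonneg)
lemma psi_le1: "psi s \<le> 1" unfolding psi_def by (rule sum_fin_le1[OF Bs_finite])

lemma Y_nonneg: "0 \<le> - ln (p k)" using pos[of k] le1[of k] by simp

lemma mY_nonneg: "0 \<le> mY s" unfolding mY_def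
  using Y_nonneg pos by (intro sum_nonneg mult_nonneg_nonneg) (auto simp: less_imp_le)

lemma E4: "(\<Sum>a\<in>Aset p d (exp (-s)). tensor_eig p a) \<le> psi s ^ d"
proof -
  have "(\<Sum>a\<in>Aset p d (exp (-s)). tensor_eig p a) \<le> (\<Sum>a\<in>LB (Bs s) d. tensor_eig p a)"
    by (rule sum_mono2) (use Aset_sub[of d "exp (-s)"] LB_finite[OF Bs_finite] tensor_nonneg in \<open>auto simp: Bs_def\<close>)
  also have "\<dots> = psi s ^ d" unfolding psi_def by (rule sum_LB_prod[OF Bs_finite])
  finally show ?thesis .
qed

lemma tensor_exp: "tensor_eig p ks = exp (- sum_list (map (\<lambda>k. - ln (p k)) ks))"
  unfolding tensor_eig_def
  by (induction ks) (auto simp: exp_diff pos exp_minus divide_inverse)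

lemma E2:
  assumes t: "0 < t"
  shows "psi x ^ d - real d * mY x / t \<le> (\<Sum>a\<in>Aset p d (exp (-t)). tensor_eig p a)"
proof -
  let ?L = "LB (Bs x) d" and ?A = "Aset p d (exp (-t))" and ?P = "tensor_eig p"
  let ?Y = "\<lambda>k. - ln (p k)"
  have Lfin: "finite ?L" by (rule LB_finite[OF Bs_finite])
  have Afin: "finite ?A" by (rule Aset_finite) simp
  have Ynn: "0 \<le> sum_list (map ?Y ks)" for ks
  proof (induction ks)
    case (Cons a ks) then show ?case using Y_nonneg[of a] by simp
  qed simp
  have out: "t < sum_list (map ?Y ks)" if "ks \<in> ?L" "ks \<notin> ?A" for ks
  proof -
    have "ks \<in> multi_indices d" using that unfolding LB_def multi_indices_def by auto
    then have "?P ks < exp (-t)" using that unfolding Aset_def by auto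
    then show ?thesis unfolding tensor_exp by simp
  qed
  have "psi x ^ d = (\<Sum>a\<in>?L. ?P a)" unfolding psi_def by (rule sum_LB_prod[OF Bs_finite, symmetric])
  also have "\<dots> = (\<Sum>a\<in>?L \<inter> ?A. ?P a) + (\<Sum>a\<in>?L - ?A. ?P a)"
    by (rule sum.Int_Diff[OF Lfin])
  also have "(\<Sum>a\<in>?L \<inter> ?A. ?P a) \<le> (\<Sum>a\<in>?A. ?P a)"
    by (rule sum_mono2[OF Afin]) (auto simp: tensor_nonneg)
  also have "(\<Sum>a\<in>?L - ?A. ?P a) \<le> (\<Sum>a\<in>?L - ?A. ?P a * sum_list (map ?Y a) / t)"
  proof (rule sum_mono)
    fix a assume a: "a \<in> ?L - ?A"
    have "?P a * 1 \<le> ?P a * (sum_list (map ?Y a) / t)"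
      using out[of a] a t tensor_nonneg[of a] by (intro mult_left_mono) auto
    then show "?P a \<le> ?P a * sum_list (map ?Y a) / t" by simp
  qed
  also have "\<dots> \<le> (\<Sum>a\<in>?L. ?P a * sum_list (map ?Y a) / t)"
    by (rule sum_mono2[OF Lfin]) (use t Ynn tensor_nonneg in auto)
  also have "\<dots> = (\<Sum>a\<in>?L. ?P a * sum_list (map ?Y a)) / t"
    by (simp add: sum_divide_distrib)
  also have "\<dots> = real d * psi x ^ (d - 1) * mY x / t"
    unfolding psi_def mY_def by (subst sum_LB_prod_Y[OF Bs_finite]) simp
  also have "\<dots> \<le> real d * mY x / t"
  proof -
    have "psi x ^ (d - 1) \<le> 1" using psi_nonneg psi_le1 by (simp add: power_le_one)
    then have "real d * psi x ^ (d - 1) * mY x \<le> real d * 1 * mY x"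
      using mY_nonneg by (intro mult_right_mono mult_left_mono) auto
    then show ?thesis using t by (simp add: divide_right_mono)
  qed
  finally show ?thesis by simp
qed

end



lemma half_induct:
  fixes P :: "real \<Rightarrow> bool"
  assumes a: "0 < a"
    and base: "\<And>x. a \<le> x \<Longrightarrow> x \<le> 2 * a \<Longrightarrow> P x"
    and step: "\<And>x. 2 * a \<le> x \<Longrightarrow> P (x / 2) \<Longrightarrow> P x"
    and x: "a \<le> x"
  shows "P x"
proof -
  have I: "\<forall>x. a \<le> x \<longrightarrow> x \<le> 2 ^ (Suc n) * a \<longrightarrow> P x" for n
  proof (induction n)
    case 0 then show ?case using base by simp
  next
    case (Suc n)
    show ?case
    proof (intro allI impI)
      fix x assume x1: "a \<le> x" and x2: "x \<le> 2 ^ Suc (Suc n) * a"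
      show "P x"
      proof (cases "x \<le> 2 * a")
        case True then show ?thesis using base x1 by simp
      next
        case False
        have "P (x / 2)" using Suc False x2 by auto
        then show ?thesis using step False by simp
      qed
    qed
  qed
  obtain n where "x / a < 2 ^ n" using real_arch_pow[of 2 "x / a"] by auto
  then have "x < a * 2 ^ n" using a by (simp add: field_simps)
  moreover have "a * 2 ^ n \<le> a * 2 ^ Suc n" using a by simp
  ultimately have "x \<le> 2 ^ Suc n * a" by (simp add: mult.commute)
  then show ?thesis using I x by blast
qed

locale mainsetup = probseq +
  fixes \<phi> :: "real \<Rightarrow> real"
  assumes phi_eq: "\<And>x. 0 \<le> x \<Longrightarrow> \<phi> x = 1 - psi x"
    and phi_pos: "\<And>x. 0 \<le> x \<Longrightarrow> 0 < \<phi> x"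
    and sv: "\<And>c. 0 < c \<Longrightarrow> ((\<lambda>x. \<phi> (c * x) / \<phi> x) \<longlongrightarrow> 1) at_top"
begin

lemma psi_mono: "x \<le> y \<Longrightarrow> psi x \<le> psi y"
  unfolding psi_def
proof (rule sum_mono2[OF Bs_finite])
  assume "x \<le> y"
  then have e: "exp (-y) \<le> exp (-x)" by simp
  show "Bs x \<subseteq> Bs y" unfolding Bs_def using order_trans[OF e] by blast
qed (auto intro: less_imp_le[OF pos])

lemma phi_anti: "0 \<le> x \<Longrightarrow> x \<le> y \<Longrightarrow> \<phi> y \<le> \<phi> x"
  using phi_eq psi_mono by simp

lemma phi_le1: "0 \<le> x \<Longrightarrow> \<phi> x \<le> 1"
  using phi_eq psi_nonneg by simp

lemma phi_to0: "(\<phi> \<longlongrightarrow> 0) at_top"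
proof (rule order_tendstoI)
  fix e :: real assume "e < 0"
  then show "eventually (\<lambda>x. e < \<phi> x) at_top"
    using phi_pos by (intro eventually_at_top_linorderI[of 0]) (auto intro: less_trans)
next
  fix e :: real assume e: "0 < e"
  have "(\<lambda>K. \<Sum>k<K. p k) \<longlonglongrightarrow> 1" using summable_LIMSEQ[OF summ] sum1 by simp
  then have "eventually (\<lambda>K. 1 - e < (\<Sum>k<K. p k)) sequentially"
    using e by (intro order_tendstoD) auto
  then obtain K where K: "1 - e < (\<Sum>k<K. p k)" by (auto simp: eventually_sequentially)
  define X where "X = (\<Sum>k<K. - ln (p k))"
  have X0: "0 \<le> X" unfolding X_def by (intro sum_nonneg Y_nonneg)
  show "eventually (\<lambda>x. \<phi> x < e) at_top"
  proof (rule eventually_at_top_linorderI[of X])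
    fix x assume x: "X \<le> x"
    have sub: "{..<K} \<subseteq> Bs x"
    proof
      fix k assume k: "k \<in> {..<K}"
      have "- ln (p k) \<le> X" unfolding X_def
        by (rule member_le_sum) (use k Y_nonneg in auto)
      then have "- x \<le> ln (p k)" using x by simp
      then have "exp (- x) \<le> exp (ln (p k))" by simp
      then show "k \<in> Bs x" using pos[of k] by (simp add: Bs_def)
    qed
    have "(\<Sum>k<K. p k) \<le> psi x" unfolding psi_def
      by (rule sum_mono2[OF Bs_finite sub]) (auto intro: less_imp_le pos)
    then show "\<phi> x < e" using phi_eq[of x] x X0 K by simp
  qed
qed

lemma sv_inv: "0 < c \<Longrightarrow> ((\<lambda>x. \<phi> x / \<phi> (c * x)) \<longlongrightarrow> 1) at_top"
proof -
  assume c: "0 < c"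
  have "((\<lambda>x. inverse (\<phi> (c * x) / \<phi> x)) \<longlongrightarrow> inverse 1) at_top"
    by (rule tendsto_inverse[OF sv[OF c]]) simp
  then show ?thesis by simp
qed

lemma doubling: "\<exists>X0\<ge>1. \<forall>x\<ge>X0. \<phi> (x / 2) \<le> 5 / 4 * \<phi> x"
proof -
  have "eventually (\<lambda>x. \<phi> ((1/2) * x) / \<phi> x < 5/4) at_top"
    using sv[of "1/2"] by (intro order_tendstoD) auto
  then obtain X where X: "\<And>x. x \<ge> X \<Longrightarrow> \<phi> ((1/2) * x) / \<phi> x < 5/4"
    by (auto simp: eventually_at_top_linorder)
  show ?thesis
  proof (intro exI[of _ "max X 1"] conjI allI impI)
    fix x assume x: "max X 1 \<le> x"
    then have "\<phi> (x / 2) / \<phi> x < 5/4" using X[of x] by simp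
    moreover have "0 < \<phi> x" using phi_pos x by simp
    ultimately show "\<phi> (x / 2) \<le> 5 / 4 * \<phi> x" by (simp add: field_simps)
  qed simp
qed

lemma mY_le: "0 \<le> x \<Longrightarrow> mY x \<le> x"
proof -
  assume x: "0 \<le> x"
  have "mY x \<le> (\<Sum>k\<in>Bs x. p k * x)" unfolding mY_def
  proof (rule sum_mono)
    fix k assume "k \<in> Bs x"
    then have "exp (- x) \<le> p k" by (simp add: Bs_def)
    then have "- x \<le> ln (p k)" using pos[of k] by (metis ln_exp ln_le_cancel_iff exp_gt_zero)
    then show "p k * - ln (p k) \<le> p k * x" using pos[of k] by (intro mult_left_mono) auto
  qed
  also have "\<dots> = psi x * x" unfolding psi_def by (simp add: sum_distrib_right)
  also have "\<dots> \<le> x" using psi_le1 psi_nonneg x by (simp add: mult_left_le_one_le)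
  finally show ?thesis .
qed

lemma mY_step: "0 \<le> x \<Longrightarrow> mY x \<le> mY (x / 2) + x * \<phi> (x / 2)"
proof -
  assume x: "0 \<le> x"
  have e: "exp (-x) \<le> exp (-(x/2))" using x by simp
  have sub: "Bs (x/2) \<subseteq> Bs x" unfolding Bs_def using order_trans[OF e] by blast
  have "mY x = mY (x/2) + (\<Sum>k\<in>Bs x - Bs (x/2). p k * - ln (p k))"
    unfolding mY_def using sum.subset_diff[OF sub Bs_finite, of "\<lambda>k. p k * - ln (p k)"] by simp
  also have "(\<Sum>k\<in>Bs x - Bs (x/2). p k * - ln (p k)) \<le> (\<Sum>k\<in>Bs x - Bs (x/2). p k * x)"
  proof (rule sum_mono)
    fix k assume "k \<in> Bs x - Bs (x/2)"
    then have "exp (- x) \<le> p k" by (simp add: Bs_def)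
    then have "- x \<le> ln (p k)" using pos[of k] by (metis ln_exp ln_le_cancel_iff exp_gt_zero)
    then show "p k * - ln (p k) \<le> p k * x" using pos[of k] by (intro mult_left_mono) auto
  qed
  also have "\<dots> = x * (psi x - psi (x/2))"
    unfolding psi_def using sum.subset_diff[OF sub Bs_finite, of p]
    by (simp add: sum_distrib_left sum_distrib_right mult.commute)
  also have "\<dots> \<le> x * \<phi> (x/2)"
    using phi_eq[of "x/2"] psi_le1[of x] x by (intro mult_left_mono) auto
  finally show ?thesis by simp
qed

lemma mY_bound: "\<exists>Bc\<ge>0. \<forall>x\<ge>0. mY x \<le> 4 * x * \<phi> x + Bc"
proof -
  obtain X0 where X0: "X0 \<ge> 1" and D: "\<And>x. x \<ge> X0 \<Longrightarrow> \<phi> (x / 2) \<le> 5 / 4 * \<phi> x"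
    using doubling by auto
  have main: "mY x \<le> 4 * x * \<phi> x + 2 * X0" if "X0 \<le> x" for x
  proof (rule half_induct[where P="\<lambda>x. mY x \<le> 4 * x * \<phi> x + 2 * X0" and a=X0])
    show "0 < X0" using X0 by simp
    show "X0 \<le> x" by fact
  next
    fix x assume "X0 \<le> x" "x \<le> 2 * X0"
    moreover have "0 \<le> 4 * x * \<phi> x" using X0 phi_pos[of x] \<open>X0 \<le> x\<close> by simp
    ultimately show "mY x \<le> 4 * x * \<phi> x + 2 * X0"
      using mY_le[of x] X0 by linarith
  next
    fix x assume x: "2 * X0 \<le> x" and IH: "mY (x / 2) \<le> 4 * (x / 2) * \<phi> (x / 2) + 2 * X0"
    have x0: "0 \<le> x" using x X0 by simp
    have "mY x \<le> mY (x/2) + x * \<phi> (x/2)" by (rule mY_step[OF x0])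
    also have "\<dots> \<le> 3 * x * \<phi> (x / 2) + 2 * X0" using IH by simp
    also have "\<dots> \<le> 3 * x * (5/4 * \<phi> x) + 2 * X0"
      using D[of x] x X0 x0 by (intro add_right_mono mult_left_mono) auto
    also have "\<dots> \<le> 4 * x * \<phi> x + 2 * X0"
      using x0 phi_pos[of x] by (simp add: mult_nonneg_nonneg)
    finally show "mY x \<le> 4 * x * \<phi> x + 2 * X0" .
  qed
  show ?thesis
  proof (intro exI[of _ "2 * X0"] conjI allI impI)
    fix x :: real assume x: "0 \<le> x"
    show "mY x \<le> 4 * x * \<phi> x + 2 * X0"
    proof (cases "X0 \<le> x")
      case True then show ?thesis by (rule main)
    next
      case False
      have "0 \<le> 4 * x * \<phi> x" using x phi_pos[OF x] by simp
      then show ?thesis using mY_le[OF x] False X0 by linarith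
    qed
  qed (use X0 in simp)
qed

lemma xphi_inf: "filterlim (\<lambda>x. x * \<phi> x) at_top at_top"
proof -
  obtain X0 where X0: "X0 \<ge> 1" and D: "\<And>x. x \<ge> X0 \<Longrightarrow> \<phi> (x / 2) \<le> 5 / 4 * \<phi> x"
    using doubling by auto
  have stepI: "8/5 * ((x/2) * \<phi> (x/2)) \<le> x * \<phi> x" if "2 * X0 \<le> x" for x
    using D[of x] that X0 by (simp add: field_simps)
  define c where "c = X0 * \<phi> (2 * X0)"
  have c: "0 < c" unfolding c_def using X0 phi_pos[of "2*X0"] by simp
  have G: "c \<le> x * \<phi> x" if "X0 \<le> x" for x
  proof (rule half_induct[where P="\<lambda>x. c \<le> x * \<phi> x" and a=X0])
    show "0 < X0" using X0 by simp
    show "X0 \<le> x" by fact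
  next
    fix x assume x: "X0 \<le> x" "x \<le> 2 * X0"
    have "\<phi> (2 * X0) \<le> \<phi> x" using phi_anti x X0 by simp
    then show "c \<le> x * \<phi> x" unfolding c_def
      using x X0 phi_pos[of "2*X0"] by (intro mult_mono) auto
  next
    fix x assume x: "2 * X0 \<le> x" and IH: "c \<le> x / 2 * \<phi> (x / 2)"
    show "c \<le> x * \<phi> x" using stepI[OF x] IH c by linarith
  qed
  have H: "\<forall>x. 2 ^ n * X0 \<le> x \<longrightarrow> (8/5) ^ n * c \<le> x * \<phi> x" for n
  proof (induction n)
    case 0 then show ?case using G by simp
  next
    case (Suc n)
    show ?case
    proof (intro allI impI)
      fix x assume x: "2 ^ Suc n * X0 \<le> x"
      then have "2 ^ n * X0 \<le> x / 2" by simp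
      then have "(8/5) ^ n * c \<le> x / 2 * \<phi> (x / 2)" using Suc by blast
      moreover have "2 * X0 \<le> x"
      proof -
        have "(1::real) \<le> 2 ^ n" by simp
        then have "2 * X0 \<le> 2 * 2 ^ n * X0" using X0 by simp
        then show ?thesis using x by simp
      qed
      ultimately show "(8/5) ^ Suc n * c \<le> x * \<phi> x" using stepI[of x] by simp
    qed
  qed
  show ?thesis
  proof (subst filterlim_at_top, intro allI)
    fix Z :: real
    obtain n where n: "Z / c < (8/5) ^ n" using real_arch_pow[of "8/5" "Z / c"] by auto
    then have "Z \<le> (8/5) ^ n * c" using c by (simp add: field_simps)
    then show "eventually (\<lambda>x. Z \<le> x * \<phi> x) at_top"
    proof (intro eventually_at_top_linorderI[of "2 ^ n * X0"])
      fix x assume "2 ^ n * X0 \<le> x"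
      then have "(8/5) ^ n * c \<le> x * \<phi> x" using H[of n] by blast
      then show "Z \<le> x * \<phi> x" using \<open>Z \<le> (8/5) ^ n * c\<close> by linarith
    qed
  qed
qed

end



context mainsetup begin

lemma psi_lt1: "0 \<le> s \<Longrightarrow> psi s < 1"
  using phi_eq phi_pos by fastforce

lemma n_to_inf:
  fixes n :: "nat \<Rightarrow> nat" and c0 :: real
  assumes c0: "0 < c0"
    and Lii: "\<And>d s. c0 \<le> real (n d) * exp (-s) + psi s ^ d"
  shows "filterlim (\<lambda>d. real (n d)) at_top sequentially"
proof (subst filterlim_at_top, intro allI)
  fix Z :: real
  define s where "s = max 0 (ln (2 * Z / c0))"
  have s0: "0 \<le> s" unfolding s_def by simp
  have es: "2 * Z / c0 \<le> exp s"
  proof (cases "0 < 2 * Z / c0")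
    case True
    have "ln (2 * Z / c0) \<le> s" unfolding s_def by simp
    then have "exp (ln (2 * Z / c0)) \<le> exp s" by (simp only: exp_le_cancel_iff)
    then show ?thesis using True by simp
  next
    case False then show ?thesis by (smt (verit) exp_gt_zero)
  qed
  have "(\<lambda>d. psi s ^ d) \<longlonglongrightarrow> 0"
    using psi_lt1[OF s0] psi_nonneg[of s] by (intro LIMSEQ_power_zero) simp
  then have "eventually (\<lambda>d. psi s ^ d < c0 / 2) sequentially"
    using c0 by (intro order_tendstoD) auto
  then show "eventually (\<lambda>d. Z \<le> real (n d)) sequentially"
  proof (rule eventually_mono)
    fix d assume h: "psi s ^ d < c0 / 2"
    have "c0 / 2 \<le> real (n d) * exp (-s)" using Lii[of d s] h by linarith
    then have "c0 / 2 * exp s \<le> real (n d)" by (simp add: exp_minus field_simps)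
    moreover have "Z \<le> c0 / 2 * exp s" using es c0 by (simp add: field_simps)
    ultimately show "Z \<le> real (n d)" by linarith
  qed
qed

lemma upper_part:
  fixes n :: "nat \<Rightarrow> nat" and \<epsilon> :: real
  assumes e: "0 < \<epsilon>" "\<epsilon> < 1"
    and n1: "\<And>d. 1 \<le> n d"
    and Lii: "\<And>d s. 1 - \<epsilon>\<^sup>2 \<le> real (n d) * exp (-s) + psi s ^ d"
    and g: "0 < \<gamma>"
  shows "eventually (\<lambda>d. real d * \<phi> (ln (real (n d))) < - ln (1 - \<epsilon>\<^sup>2) + \<gamma>) sequentially"
proof -
  define c0 where "c0 = 1 - \<epsilon>\<^sup>2"
  have c0: "0 < c0" "c0 < 1" unfolding c0_def using e by (auto simp: power_less_one_iff abs_square_less_1)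
  have P0: "filterlim (\<lambda>d. real (n d)) at_top sequentially"
    by (rule n_to_inf[OF c0(1)]) (use Lii in \<open>simp add: c0_def\<close>)
  have Lnn: "filterlim (\<lambda>d. ln (real (n d))) at_top sequentially"
    by (rule filterlim_compose[OF ln_at_top P0])
  define u where "u d = - ln (c0 - inverse (real (n d)))" for d
  define R where "R d = \<phi> (ln (real (n d))) / \<phi> (2 * ln (real (n d)))" for d
  have inv0: "((\<lambda>d. inverse (real (n d))) \<longlongrightarrow> 0) sequentially"
    by (rule tendsto_inverse_0_at_top[OF P0])
  have "(\<lambda>d. c0 - inverse (real (n d))) \<longlonglongrightarrow> c0 - 0"
    by (intro tendsto_diff tendsto_const inv0)
  then have "(\<lambda>d. ln (c0 - inverse (real (n d)))) \<longlonglongrightarrow> ln c0"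
    using c0 by (intro tendsto_ln) auto
  then have ulim: "u \<longlonglongrightarrow> - ln c0"
    unfolding u_def by (rule tendsto_minus)
  have Rlim: "R \<longlonglongrightarrow> 1"
    unfolding R_def by (rule filterlim_compose[OF sv_inv[of 2] Lnn]) simp
  have "(\<lambda>d. u d * R d) \<longlonglongrightarrow> - ln c0 * 1" by (intro tendsto_mult ulim Rlim)
  then have ev1: "eventually (\<lambda>d. u d * R d < - ln c0 + \<gamma>) sequentially"
    using g by (intro order_tendstoD) auto
  have ev2: "eventually (\<lambda>d. inverse (real (n d)) < c0) sequentially"
    using inv0 c0 by (intro order_tendstoD) auto
  show ?thesis
  proof (rule eventually_mono[OF eventually_conj[OF ev1 ev2]])
    fix d assume h: "u d * R d < - ln c0 + \<gamma> \<and> inverse (real (n d)) < c0"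
    define L where "L = ln (real (n d))"
    have nd: "1 \<le> real (n d)" using n1[of d] by simp
    have L0: "0 \<le> L" unfolding L_def using nd by simp
    define s where "s = 2 * L"
    have s0: "0 \<le> s" using L0 s_def by simp
    have "real (n d) * exp (-s) = inverse (real (n d))"
    proof -
      have "exp (-s) = exp (- L) * exp (- L)" unfolding s_def
        by (simp only: exp_add[symmetric]) simp
      then have "exp (-s) = inverse (exp L) ^ 2" by (simp add: exp_minus power2_eq_square)
      also have "exp L = real (n d)" unfolding L_def using nd by simp
      finally show ?thesis by (simp add: power2_eq_square field_simps)
    qed
    moreover have "psi s ^ d \<le> exp (- (real d * \<phi> s))"
    proof -
      have "psi s = 1 - \<phi> s" using phi_eq[OF s0] by simp
      moreover have "1 - \<phi> s \<le> exp (- \<phi> s)" using exp_ge_add_one_self[of "- \<phi> s"] by simp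
      ultimately have "psi s ^ d \<le> exp (- \<phi> s) ^ d"
        using psi_nonneg phi_le1[OF s0] by (intro power_mono) auto
      also have "\<dots> = exp (- (real d * \<phi> s))" by (simp add: exp_of_nat_mult[symmetric])
      finally show ?thesis .
    qed
    ultimately have "c0 - inverse (real (n d)) \<le> exp (- (real d * \<phi> s))"
      using Lii[of d s] unfolding c0_def by linarith
    moreover have "0 < c0 - inverse (real (n d))" using h by simp
    ultimately have "ln (c0 - inverse (real (n d))) \<le> ln (exp (- (real d * \<phi> s)))"
      by (subst ln_le_cancel_iff) auto
    then have "ln (c0 - inverse (real (n d))) \<le> - (real d * \<phi> s)" by simp
    then have A: "real d * \<phi> s \<le> u d" unfolding u_def by simp
    have phis: "0 < \<phi> s" using phi_pos[OF s0] .
    have Rd: "R d = \<phi> L / \<phi> s" unfolding R_def L_def s_def by simp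
    have Rnn: "0 \<le> R d" unfolding Rd using phi_pos[OF L0] phis by simp
    have "real d * \<phi> L = real d * \<phi> s * R d"
      unfolding Rd using phis by simp
    also have "\<dots> \<le> u d * R d" by (rule mult_right_mono[OF A Rnn])
    finally show "real d * \<phi> (ln (real (n d))) < - ln (1 - \<epsilon>\<^sup>2) + \<gamma>"
      using h unfolding L_def c0_def by linarith
  qed
qed


lemma lower_part:
  fixes n :: "nat \<Rightarrow> nat" and \<epsilon> :: real
  assumes e: "0 < \<epsilon>" "\<epsilon> < 1"
    and n1: "\<And>d. 1 \<le> n d"
    and Ui: "\<And>d x t. 0 < t \<Longrightarrow> 1 - \<epsilon>\<^sup>2 \<le> psi x ^ d - real d * mY x / t \<Longrightarrow> real (n d) \<le> exp t"
    and g: "0 < \<gamma>"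
  shows "eventually (\<lambda>d. - ln (1 - \<epsilon>\<^sup>2) - \<gamma> < real d * \<phi> (ln (real (n d)))) sequentially"
proof -
  define c0 where "c0 = 1 - \<epsilon>\<^sup>2"
  have c0: "0 < c0" "c0 < 1" unfolding c0_def using e by (auto simp: power_less_one_iff abs_square_less_1)
  define a where "a = - ln c0"
  have a: "0 < a" unfolding a_def using c0 by simp
  have ea: "exp (- a) = c0" unfolding a_def using c0 by simp
  define b where "b = a - min \<gamma> a / 2"
  have b: "0 < b" "b < a" "a - \<gamma> < b" unfolding b_def using a g by (auto simp: min_def)
  define \<delta> where "\<delta> = (exp (- b) - exp (- a)) / 4"
  have \<delta>: "0 < \<delta>" unfolding \<delta>_def using b by simp
  obtain Bc where Bc: "Bc \<ge> 0" and mYb: "\<And>x. x \<ge> 0 \<Longrightarrow> mY x \<le> 4 * x * \<phi> x + Bc"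
    using mY_bound by auto
  define M :: nat where "M = nat \<lceil>4 * b / \<delta>\<rceil> + 1"
  define Mr where "Mr = real M"
  have Mr: "0 < Mr" unfolding Mr_def M_def by simp
  have "4 * b / \<delta> \<le> Mr" unfolding Mr_def M_def by linarith
  then have Mb: "4 * b / Mr \<le> \<delta>" using Mr \<delta> b by (simp add: field_simps)
  define N where "N d = (LEAST N::nat. real d * \<phi> (real N) \<le> b)" for d
  have phN: "(\<lambda>N. \<phi> (real N)) \<longlonglongrightarrow> 0"
    by (rule filterlim_compose[OF phi_to0 filterlim_real_sequentially])
  have Nex: "\<exists>N::nat. real d * \<phi> (real N) \<le> b" for d
  proof -
    have "(\<lambda>N. real d * \<phi> (real N)) \<longlonglongrightarrow> real d * 0" by (intro tendsto_mult tendsto_const phN)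
    then have "eventually (\<lambda>N. real d * \<phi> (real N) < b) sequentially"
      using b by (intro order_tendstoD) auto
    then obtain N where "real d * \<phi> (real N) < b" by (auto simp: eventually_sequentially)
    then show ?thesis by (intro exI[of _ N]) simp
  qed
  have NLe: "real d * \<phi> (real (N d)) \<le> b" for d
    unfolding N_def by (rule LeastI_ex[OF Nex])
  have NGt: "b < real d * \<phi> (real N')" if "N' < N d" for d N'
    using not_less_Least[of N' "\<lambda>N. real d * \<phi> (real N) \<le> b"] that unfolding N_def by simp
  have Nlim: "filterlim N at_top sequentially"
  proof (subst filterlim_at_top, intro allI)
    fix Z :: nat
    have "\<forall>N'\<in>{..<Z}. eventually (\<lambda>d. b < real d * \<phi> (real N')) sequentially"
    proof
      fix N' assume "N' \<in> {..<Z}"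
      have "filterlim (\<lambda>d. \<phi> (real N') * real d) at_top sequentially"
        using phi_pos[of "real N'"] by (intro filterlim_tendsto_pos_mult_at_top tendsto_const filterlim_real_sequentially) auto
      then have "eventually (\<lambda>d. b + 1 \<le> \<phi> (real N') * real d) sequentially"
        by (simp add: filterlim_at_top)
      then show "eventually (\<lambda>d. b < real d * \<phi> (real N')) sequentially"
        by (rule eventually_mono) (simp add: mult.commute)
    qed
    then have "eventually (\<lambda>d. \<forall>N'\<in>{..<Z}. b < real d * \<phi> (real N')) sequentially"
      by (intro eventually_ball_finite) auto
    then show "eventually (\<lambda>d. Z \<le> N d) sequentially"
    proof (rule eventually_mono)
      fix d assume h: "\<forall>N'\<in>{..<Z}. b < real d * \<phi> (real N')"
      show "Z \<le> N d"
      proof (rule ccontr)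
        assume "\<not> Z \<le> N d"
        then have "b < real d * \<phi> (real (N d))" using h by auto
        then show False using NLe[of d] by simp
      qed
    qed
  qed
  define x where "x d = real (N d)" for d
  have xlim: "filterlim x at_top sequentially"
    unfolding x_def by (rule filterlim_compose[OF filterlim_real_sequentially Nlim])
  have phx: "(\<lambda>d. \<phi> (x d)) \<longlonglongrightarrow> 0" by (rule filterlim_compose[OF phi_to0 xlim])
  have ixp: "(\<lambda>d. inverse (x d * \<phi> (x d))) \<longlonglongrightarrow> 0"
    by (rule tendsto_inverse_0_at_top[OF filterlim_compose[OF xphi_inf xlim]])
  define F where "F d = exp (- b - 2 * b * \<phi> (x d)) - 4 * b / Mr - Bc * b / Mr * inverse (x d * \<phi> (x d))" for d
  have "F \<longlonglongrightarrow> exp (- b - 2 * b * 0) - 4 * b / Mr - Bc * b / Mr * 0"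
    unfolding F_def by (intro tendsto_intros phx ixp)
  moreover have "c0 < exp (- b - 2 * b * 0) - 4 * b / Mr - Bc * b / Mr * 0"
    using Mb \<delta> ea unfolding \<delta>_def by simp
  ultimately have evF: "eventually (\<lambda>d. c0 < F d) sequentially" by (rule order_tendstoD)
  have r2: "(\<lambda>d. \<phi> (Mr * x d) / \<phi> (x d)) \<longlonglongrightarrow> 1"
    by (rule filterlim_compose[OF sv[OF Mr] xlim])
  have ev2: "eventually (\<lambda>d. 2 \<le> x d) sequentially" using xlim by (simp add: filterlim_at_top)
  have lo: "(\<lambda>d. \<phi> (x d) / \<phi> ((1/2) * x d)) \<longlonglongrightarrow> 1"
    by (rule filterlim_compose[OF sv_inv xlim]) simp
  have r1: "(\<lambda>d. \<phi> (x d) / \<phi> (x d - 1)) \<longlonglongrightarrow> 1"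
  proof (rule tendsto_sandwich[OF _ _ lo tendsto_const])
    show "eventually (\<lambda>d. \<phi> (x d) / \<phi> ((1/2) * x d) \<le> \<phi> (x d) / \<phi> (x d - 1)) sequentially"
      using ev2
    proof (rule eventually_mono)
      fix d assume xd: "2 \<le> x d"
      have "\<phi> (x d - 1) \<le> \<phi> ((1/2) * x d)" using xd by (intro phi_anti) auto
      then show "\<phi> (x d) / \<phi> ((1/2) * x d) \<le> \<phi> (x d) / \<phi> (x d - 1)"
        using xd phi_pos[of "x d"] phi_pos[of "x d - 1"] by (intro divide_left_mono) auto
    qed
    show "eventually (\<lambda>d. \<phi> (x d) / \<phi> (x d - 1) \<le> 1) sequentially"
      using ev2
    proof (rule eventually_mono)
      fix d assume xd: "2 \<le> x d"
      have "\<phi> (x d) \<le> \<phi> (x d - 1)" using xd by (intro phi_anti) auto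
      then show "\<phi> (x d) / \<phi> (x d - 1) \<le> 1" using phi_pos[of "x d - 1"] xd by simp
    qed
  qed
  have "(\<lambda>d. b * (\<phi> (x d) / \<phi> (x d - 1)) * (\<phi> (Mr * x d) / \<phi> (x d))) \<longlonglongrightarrow> b * 1 * 1"
    by (intro tendsto_mult tendsto_const r1 r2)
  then have evB: "eventually (\<lambda>d. a - \<gamma> < b * (\<phi> (x d) / \<phi> (x d - 1)) * (\<phi> (Mr * x d) / \<phi> (x d))) sequentially"
    using b by (intro order_tendstoD) auto
  have evH: "eventually (\<lambda>d. \<phi> (x d) < 1/2) sequentially" using phx by (intro order_tendstoD) auto
  show ?thesis
    using eventually_conj[OF evF eventually_conj[OF evB eventually_conj[OF ev2 evH]]]
  proof (rule eventually_mono)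
    fix d assume h: "c0 < F d \<and> a - \<gamma> < b * (\<phi> (x d) / \<phi> (x d - 1)) * (\<phi> (Mr * x d) / \<phi> (x d)) \<and> 2 \<le> x d \<and> \<phi> (x d) < 1/2"
    define X where "X = x d"
    define u where "u = \<phi> X"
    have X2: "2 \<le> X" using h X_def by simp
    have u: "0 < u" "u < 1/2" using h phi_pos[of X] X2 unfolding u_def X_def by auto
    have du: "real d * u \<le> b" using NLe[of d] unfolding u_def X_def x_def .
    have psiX: "psi X = 1 - u" using phi_eq[of X] X2 unfolding u_def by simp
    have lnb: "- u - 2 * u\<^sup>2 \<le> ln (1 - u)" using ln_one_minus_pos_lower_bound[of u] u by simp
    have "psi X ^ d = exp (ln (1 - u)) ^ d" using psiX u by simp
    also have "\<dots> = exp (real d * ln (1 - u))" by (simp add: exp_of_nat_mult)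
    finally have psid: "psi X ^ d = exp (real d * ln (1 - u))" .
    have "real d * (- u - 2 * u\<^sup>2) \<le> real d * ln (1 - u)" using lnb by (intro mult_left_mono) auto
    moreover have "- b - 2 * b * u \<le> real d * (- u - 2 * u\<^sup>2)"
    proof -
      have "real d * u * u \<le> b * u" using du u by (intro mult_right_mono) auto
      then show ?thesis using du by (simp add: power2_eq_square algebra_simps)
    qed
    ultimately have P1: "exp (- b - 2 * b * u) \<le> psi X ^ d" unfolding psid by simp
    have X0: "0 < X" using X2 by simp
    have "real d * mY X / (Mr * X) \<le> real d * (4 * X * u + Bc) / (Mr * X)"
      using mYb[of X] X0 Mr unfolding u_def by (intro divide_right_mono mult_left_mono) auto
    also have "\<dots> = 4 * (real d * u) / Mr + Bc * (real d * u) / Mr * inverse (X * u)"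
      using X0 Mr u by (simp add: field_simps)
    also have "\<dots> \<le> 4 * b / Mr + Bc * b / Mr * inverse (X * u)"
      using du Mr Bc X0 u
      by (intro add_mono divide_right_mono mult_left_mono mult_right_mono) auto
    finally have P2: "real d * mY X / (Mr * X) \<le> 4 * b / Mr + Bc * b / Mr * inverse (X * u)" .
    have "c0 \<le> psi X ^ d - real d * mY X / (Mr * X)"
      using h P1 P2 unfolding F_def X_def[symmetric] u_def[symmetric] by linarith
    then have nle: "real (n d) \<le> exp (Mr * X)"
      using Ui[where d=d and x=X and t="Mr * X"] Mr X0 unfolding c0_def by simp
    have n1': "1 \<le> real (n d)" using n1[of d] by simp
    have L0: "0 \<le> ln (real (n d))" using n1' by simp
    have "ln (real (n d)) \<le> ln (exp (Mr * X))" using nle n1' by (subst ln_le_cancel_iff) auto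
    then have LM: "ln (real (n d)) \<le> Mr * X" by simp
    have A1: "\<phi> (Mr * X) \<le> \<phi> (ln (real (n d)))" by (rule phi_anti[OF L0 LM])
    have Nd: "0 < N d" using X2 unfolding X_def x_def by simp
    have xm1: "real (N d - 1) = X - 1" using Nd unfolding X_def x_def by (simp add: of_nat_diff)
    have B1: "b < real d * \<phi> (X - 1)" using NGt[of "N d - 1" d] Nd xm1 by simp
    have pX1: "0 < \<phi> (X - 1)" using X2 phi_pos by simp
    have pMX: "0 < \<phi> (Mr * X)" using X2 Mr phi_pos by simp
    have eq: "real d * \<phi> (Mr * X) = real d * \<phi> (X - 1) * (u / \<phi> (X - 1)) * (\<phi> (Mr * X) / u)"
      using pX1 u by (simp add: field_simps)
    have "b * (u / \<phi> (X - 1)) * (\<phi> (Mr * X) / u) \<le> real d * \<phi> (X - 1) * (u / \<phi> (X - 1)) * (\<phi> (Mr * X) / u)"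
      using B1 pX1 u pMX by (intro mult_right_mono) auto
    then have "a - \<gamma> < real d * \<phi> (Mr * X)"
      using h eq unfolding X_def[symmetric] u_def[symmetric] by linarith
    also have "\<dots> \<le> real d * \<phi> (ln (real (n d)))" using A1 by (intro mult_left_mono) auto
    finally show "- ln (1 - \<epsilon>\<^sup>2) - \<gamma> < real d * \<phi> (ln (real (n d)))"
      unfolding a_def c0_def .
  qed
qed

end



lemma arr_scale:
  assumes arr: "decr_arrangement f A mu" and c: "0 < c"
    and g: "\<And>a. a \<in> A \<Longrightarrow> g a = f a / c"
  shows "decr_arrangement g A (\<lambda>k. mu k / c)"
proof -
  have dec: "decseq mu" and nn: "\<And>k. 0 \<le> mu k"
    and lev: "\<And>v. v > 0 \<Longrightarrow> {k. mu k = v} \<approx> {a\<in>A. f a = v}"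
    using arr unfolding decr_arrangement_def by auto
  have "decseq (\<lambda>k. mu k / c)" using dec c unfolding decseq_def by (auto intro: divide_right_mono)
  moreover have "\<forall>k. 0 \<le> mu k / c" using nn c by simp
  moreover have "{k. mu k / c = v} \<approx> {a\<in>A. g a = v}" if v: "v > 0" for v
  proof -
    have "{k. mu k / c = v} = {k. mu k = v * c}" using c by (auto simp: field_simps)
    moreover have "{a\<in>A. g a = v} = {a\<in>A. f a = v * c}" using c by (auto simp: g divide_eq_eq)
    ultimately show ?thesis using lev[of "v * c"] v c by simp
  qed
  ultimately show ?thesis unfolding decr_arrangement_def by blast
qed

lemma tensor_div: "c \<noteq> 0 \<Longrightarrow> tensor_eig (\<lambda>k. lam k / c) a = tensor_eig lam a / c ^ length a"
  unfolding tensor_eig_def by (induction a) auto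


theorem theorem9:
  fixes lam :: "nat \<Rightarrow> real" and \<phi> :: "real \<Rightarrow> real" and mu :: "nat \<Rightarrow> nat \<Rightarrow> real"
  assumes nonneg: "\<And>k. 0 \<le> lam k"
    and decr: "decseq lam"
    and summ: "summable lam"
    and pos: "0 < lam 0"
    and mu: "\<And>d. decr_arrangement (tensor_eig lam) (multi_indices d) (mu d)"
    and sv: "slowly_varying \<phi>"
    and phi_def: "\<And>x. 0 \<le> x \<Longrightarrow>
        (\<Sum>k. if normalize_eigs lam k < exp (- x) then normalize_eigs lam k else 0) = \<phi> x"
  shows "\<forall>\<epsilon>. 0 < \<epsilon> \<and> \<epsilon> < 1 \<longrightarrow>
     ((\<lambda>d. real d * \<phi> (ln (real (n_eps (normalize_eigs (mu d)) \<epsilon>))))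
        \<longlongrightarrow> - ln (1 - \<epsilon>\<^sup>2)) sequentially"
proof -
  define \<Lambda> where "\<Lambda> = suminf lam"
  have "lam 0 \<le> \<Lambda>" unfolding \<Lambda>_def using sum_le_suminf[OF summ, of "{0}"] nonneg by simp
  then have \<Lambda>: "0 < \<Lambda>" using pos by simp
  define p where "p = normalize_eigs lam"
  have p_eq: "p k = lam k / \<Lambda>" for k unfolding p_def normalize_eigs_def \<Lambda>_def by simp
  have psumm: "summable p" unfolding p_eq[abs_def] using summ by simp
  have psum1: "suminf p = 1" unfolding p_eq[abs_def] using suminf_divide[OF summ, of \<Lambda>] \<Lambda>
    by (simp add: \<Lambda>_def)
  have pnn: "0 \<le> p k" for k using nonneg \<Lambda> p_eq by simp
  have pdec: "decseq p" using decr \<Lambda> unfolding decseq_def p_eq by (auto intro: divide_right_mono)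
  obtain T where Tpos: "\<And>x. x \<ge> T \<Longrightarrow> 0 < \<phi> x"
    and svlim: "\<And>c. c > 0 \<Longrightarrow> ((\<lambda>x. \<phi> (c * x) / \<phi> x) \<longlongrightarrow> 1) at_top"
    using sv unfolding slowly_varying_def by blast
  have phi_sum: "\<phi> x = (\<Sum>k. if p k < exp (- x) then p k else 0)" if "0 \<le> x" for x
    using phi_def[OF that] unfolding p_def by simp
  have ppos: "0 < p k" for k
  proof (rule ccontr)
    assume "\<not> 0 < p k"
    then have "lam k / \<Lambda> \<le> 0" using p_eq[of k] by simp
    then have "lam k \<le> 0" using \<Lambda> by (simp add: divide_le_0_iff)
    then have z: "lam k = 0" using nonneg[of k] by simp
    define K where "K = (LEAST K. lam K = 0)"
    have lK: "lam K = 0" unfolding K_def using LeastI[of "\<lambda>K. lam K = 0", OF z] .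
    have K0: "0 < K" using lK pos by (cases K) auto
    have below: "0 < lam j" if "j < K" for j
      using not_less_Least[of j "\<lambda>K. lam K = 0"] that nonneg[of j] unfolding K_def by simp
    have above: "lam j = 0" if "K \<le> j" for j
      using decseqD[OF decr that] lK nonneg[of j] by simp
    define x where "x = max T (max 0 (- ln (p (K - 1))))"
    have x0: "0 \<le> x" unfolding x_def by simp
    have pK1: "0 < p (K - 1)" using below[of "K - 1"] K0 p_eq \<Lambda> by simp
    have "- x \<le> ln (p (K - 1))" unfolding x_def by simp
    then have ex: "exp (- x) \<le> p (K - 1)" using pK1 by (metis exp_le_cancel_iff exp_ln)
    have "(\<lambda>k. if p k < exp (- x) then p k else 0) = (\<lambda>k. 0)"
    proof
      fix j show "(if p j < exp (- x) then p j else 0) = 0"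
      proof (cases "j < K")
        case True
        then have "p (K - 1) \<le> p j" using decseqD[OF pdec, of j "K - 1"] by simp
        then show ?thesis using ex by simp
      next
        case False then show ?thesis using above[of j] p_eq by simp
      qed
    qed
    then have "\<phi> x = 0" using phi_sum[OF x0] by simp
    moreover have "0 < \<phi> x" using Tpos[of x] unfolding x_def by simp
    ultimately show False by simp
  qed
  have ple1: "p k \<le> 1" for k
    using sum_le_suminf[OF psumm, of "{k}"] pnn psum1 by simp
  interpret probseq p
    by unfold_locales (use ppos ple1 psumm psum1 in auto)
  have phieq: "\<phi> x = 1 - psi x" if x0: "0 \<le> x" for x
  proof -
    have "(\<lambda>k. if p k < exp (- x) then p k else 0) = (\<lambda>k. p k - (if k \<in> Bs x then p k else 0))"
      by (auto simp: Bs_def)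
    moreover have "(\<lambda>k. p k - (if k \<in> Bs x then p k else 0)) sums (1 - psi x)"
      unfolding psi_def using sums_diff[OF summable_sums[OF psumm] sums_If_finite_set[OF Bs_finite]] psum1
      by simp
    ultimately show ?thesis using phi_sum[OF x0] sums_unique by metis
  qed
  have phipos: "0 < \<phi> x" if x0: "0 \<le> x" for x
  proof -
    have "psi x \<le> psi (max x T)"
      unfolding psi_def
    proof (rule sum_mono2[OF Bs_finite])
      have e: "exp (- max x T) \<le> exp (- x)" by simp
      show "Bs x \<subseteq> Bs (max x T)" unfolding Bs_def using order_trans[OF e] by blast
    qed (auto intro: less_imp_le[OF ppos])
    then have "\<phi> (max x T) \<le> \<phi> x" using phieq[OF x0] phieq[of "max x T"] x0 by simp
    moreover have "0 < \<phi> (max x T)" using Tpos by simp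
    ultimately show ?thesis by simp
  qed
  interpret mainsetup p \<phi>
    by unfold_locales (use phieq phipos svlim in auto)
  show ?thesis
  proof (intro allI impI)
    fix \<epsilon> :: real assume "0 < \<epsilon> \<and> \<epsilon> < 1"
    then have e: "0 < \<epsilon>" "\<epsilon> < 1" by auto
    have arr: "decr_arrangement (tensor_eig p) (multi_indices d) (normalize_eigs (mu d))" for d
    proof -
      have c: "0 < \<Lambda> ^ d" using \<Lambda> by simp
      have arr': "decr_arrangement (tensor_eig p) (multi_indices d) (\<lambda>k. mu d k / \<Lambda> ^ d)"
      proof (rule arr_scale[OF mu c])
        fix a assume "a \<in> multi_indices d"
        then have "length a = d" by (simp add: multi_indices_def)
        then show "tensor_eig p a = tensor_eig lam a / \<Lambda> ^ d"
          unfolding p_eq[abs_def] using tensor_div[of \<Lambda> lam a] \<Lambda> by simp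
      qed
      have s1: "suminf (\<lambda>k. mu d k / \<Lambda> ^ d) = 1" by (rule arr_suminf[OF arr'])
      have "summable (\<lambda>k. mu d k / \<Lambda> ^ d)" by (rule arr_summable[OF arr'])
      then have smu: "summable (mu d)" using \<Lambda> by simp
      have "suminf (mu d) = \<Lambda> ^ d"
        using s1 suminf_divide[OF smu, of "\<Lambda> ^ d"] c by simp
      then have "normalize_eigs (mu d) = (\<lambda>k. mu d k / \<Lambda> ^ d)"
        unfolding normalize_eigs_def by simp
      then show ?thesis using arr' by simp
    qed
    define n where "n d = n_eps (normalize_eigs (mu d)) \<epsilon>" for d
    have n1: "1 \<le> n d" for d
    proof (rule ccontr)
      assume "\<not> 1 \<le> n d"
      then have "n d = 0" by simp
      moreover have "\<epsilon>\<^sup>2 < 1" using e by (auto simp: abs_square_less_1)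
      ultimately show False using neps_facts(1)[OF arr e, of d] unfolding n_def by simp
    qed
    have Ui: "real (n d) \<le> exp t"
      if "0 < t" "1 - \<epsilon>\<^sup>2 \<le> psi x ^ d - real d * mY x / t" for d x t
      unfolding n_def
      by (rule E1[OF arr e]) (use E2[OF that(1), of x d] that(2) in linarith)
    have Lii: "1 - \<epsilon>\<^sup>2 \<le> real (n d) * exp (-s) + psi s ^ d" for d s
      using E3[OF arr[of d] e, of "exp (-s)"] E4[of d s] unfolding n_def by simp
    show "((\<lambda>d. real d * \<phi> (ln (real (n_eps (normalize_eigs (mu d)) \<epsilon>)))) \<longlongrightarrow> - ln (1 - \<epsilon>\<^sup>2)) sequentially"
      unfolding n_def[symmetric]
    proof (rule order_tendstoI)
      fix y assume "y < - ln (1 - \<epsilon>\<^sup>2)"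
      then show "eventually (\<lambda>d. y < real d * \<phi> (ln (real (n d)))) sequentially"
        using lower_part[OF e n1 Ui, where \<gamma>="- ln (1 - \<epsilon>\<^sup>2) - y"] by simp
    next
      fix y assume "- ln (1 - \<epsilon>\<^sup>2) < y"
      then show "eventually (\<lambda>d. real d * \<phi> (ln (real (n d))) < y) sequentially"
        using upper_part[OF e n1 Lii, where \<gamma>="y + ln (1 - \<epsilon>\<^sup>2)"] by simp
    qed
  qed
qed


end
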